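(* Let $\{u_n\}_{n\in\mathbb{N}}$ be a Hamel basis of a vector space $E$ and $\{f_n\}_{n\in\mathbb{N}}$ a linearly independent sequence of linear functionals on $E$ separating the points of $E$. Then there exist bijections $\alpha,\beta:\mathbb{N}\to\mathbb{N}$ such that for every $n\in\mathbb{N}$ the matrix $\{f_{\alpha(j)}(u_{\beta(k)})\}_{1\le j,k\le n}$ is invertible. Furthermore, there exist scalars $c_{j,k}\in\mathbb{K}$ for $j\le k$ such that $c_{j,j}\neq0$ for all $j$, and, setting $v_k=\sum_{m=1}^k c_{m,k}u_{\beta(m)}$, one has $f_{\alpha(j)}(v_j)=1$ for all $j\in\mathbb{N}$ and $f_{\alpha(j)}(v_k)=0$ for all $j,k\in\mathbb{N}$ with $j<k$.
   Context: Vector spaces are over $\mathbb{K}\in\{\mathbb{R},\mathbb{C}\}$. *)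

theory Defs
  imports Complex_Main "Jordan_Normal_Form.Matrix"
begin

end

theory Submission
  imports Defs "Jordan_Normal_Form.Determinant"
begin


record ('v,'k) st = al :: "nat\<Rightarrow>nat" be :: "nat\<Rightarrow>nat" vv :: "nat\<Rightarrow>'v"
  gg :: "nat \<Rightarrow> 'v \<Rightarrow> 'k" bb :: "nat\<Rightarrow>nat\<Rightarrow>'k" aa :: "nat \<Rightarrow> 'k"

lemma det_inv_mat: assumes A: "A \<in> carrier_mat n n" and d: "det A \<noteq> (0::'a::field)"
  shows "invertible_mat A"
proof -
  have "A \<in> Units (ring_mat TYPE('a) n ())" by (rule det_non_zero_imp_unit[OF A d])
  then have "\<exists>B\<in>carrier_mat n n. B * A = 1\<^sub>m n \<and> A * B = 1\<^sub>m n"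
    unfolding Units_def ring_mat_def by simp
  then obtain B where B: "B \<in> carrier_mat n n" "B * A = 1\<^sub>m n" "A * B = 1\<^sub>m n" by blast
  have dims: "dim_row A = n" "dim_col A = n" "dim_row B = n" using A B(1) by auto
  show ?thesis unfolding invertible_mat_def inverts_mat_def
    by (intro conjI exI[of _ B]) (simp_all only: square_mat.simps dims B(2,3))
qed


lemma surj_aux: fixes h :: "nat \<Rightarrow> nat" and p m :: nat
  assumes h: "\<And>m. h (2*m+p) = (LEAST r. r \<notin> h ` {..<2*m+p})"
  shows "m \<in> h ` {..<2*m+p+1}"
proof (induction m rule: less_induct)
  case (less m)
  have sub: "{..<m} \<subseteq> h ` {..<2*m+p}"
  proof
    fix m' assume "m' \<in> {..<m}"
    then have m': "m' < m" by simp
    have "m' \<in> h ` {..<2*m'+p+1}" by (rule less.IH[OF m'])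
    moreover have "h ` {..<2*m'+p+1} \<subseteq> h ` {..<2*m+p}" using m' by (intro image_mono) auto
    ultimately show "m' \<in> h ` {..<2*m+p}" by (rule subsetD[rotated])
  qed
  show ?case
  proof (cases "m \<in> h ` {..<2*m+p}")
    case True
    moreover have "h ` {..<2*m+p} \<subseteq> h ` {..<2*m+p+1}" by (intro image_mono) auto
    ultimately show ?thesis by (rule subsetD[rotated])
  next
    case False
    have "(LEAST r. r \<notin> h ` {..<2*m+p}) = m"
    proof (rule Least_equality)
      show "m \<notin> h ` {..<2*m+p}" by fact
      fix y assume y: "y \<notin> h ` {..<2*m+p}"
      show "m \<le> y"
      proof (rule ccontr)
        assume "\<not> m \<le> y"
        then have "y \<in> {..<m}" by simp
        with sub y show False by blast
      qed
    qed
    then have "h (2*m+p) = m" using h by simp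
    moreover have "2*m+p \<in> {..<2*m+p+1}" by simp
    ultimately show ?thesis by (metis image_eqI)
  qed
qed


locale L = vector_space scale for scale :: "'k::real_normed_field \<Rightarrow> 'v::ab_group_add \<Rightarrow> 'v" +
  fixes u :: "nat \<Rightarrow> 'v" and f :: "nat \<Rightarrow> 'v \<Rightarrow> 'k"
  assumes u_inj: "inj u"
    and u_indep: "independent (range u)"
    and u_span: "span (range u) = UNIV"
    and f_lin: "\<And>n. Vector_Spaces.linear scale (*) (f n)"
    and f_indep: "\<And>n (a :: nat \<Rightarrow> 'k). (\<forall>x. (\<Sum>i<n. a i * f i x) = 0) \<Longrightarrow> (\<forall>i<n. a i = 0)"
    and f_sep: "\<And>x y. x \<noteq> y \<Longrightarrow> \<exists>n. f n x \<noteq> f n y"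
begin

definition lin :: "('v \<Rightarrow> 'k) \<Rightarrow> bool" where
  "lin \<phi> \<longleftrightarrow> (\<forall>x y. \<phi> (x+y) = \<phi> x + \<phi> y) \<and> (\<forall>c x. \<phi> (scale c x) = c * \<phi> x)"

lemma lin_add: "lin \<phi> \<Longrightarrow> \<phi> (x+y) = \<phi> x + \<phi> y" by (simp add: lin_def)
lemma lin_scale: "lin \<phi> \<Longrightarrow> \<phi> (scale c x) = c * \<phi> x" by (simp add: lin_def)
lemma lin_zero: "lin \<phi> \<Longrightarrow> \<phi> 0 = 0"
  using lin_scale[of \<phi> 0 0] by simp
lemma lin_minus: "lin \<phi> \<Longrightarrow> \<phi> (- x) = - \<phi> x"
  using lin_add[of \<phi> x "-x"] lin_zero[of \<phi>] by (metis add.commute eq_neg_iff_add_eq_0)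
lemma lin_diff: "lin \<phi> \<Longrightarrow> \<phi> (x - y) = \<phi> x - \<phi> y"
  using lin_add[of \<phi> x "-y"] lin_minus[of \<phi> y] by simp
lemma lin_sum: "lin \<phi> \<Longrightarrow> \<phi> (\<Sum>i\<in>I. h i) = (\<Sum>i\<in>I. \<phi> (h i))"
  by (induction I rule: infinite_finite_induct) (auto simp: lin_zero lin_add)

lemma lin_f: "lin (f n)"
  using f_lin[of n] unfolding Vector_Spaces.linear_iff lin_def by auto

lemma lin_rep: "lin (\<lambda>x. \<Sum>i\<in>I. b i * f i x)"
  unfolding lin_def
  by (auto simp: lin_add[OF lin_f] lin_scale[OF lin_f] sum.distrib distrib_left sum_distrib_left ac_simps)

lemma lin_span0: assumes "lin \<phi>" "\<And>x. x \<in> S \<Longrightarrow> \<phi> x = 0" "x \<in> span S" shows "\<phi> x = 0"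
proof -
  have "subspace {x. \<phi> x = 0}"
    by (rule subspaceI) (auto simp: lin_zero[OF assms(1)] lin_add[OF assms(1)] lin_scale[OF assms(1)])
  then have "span S \<subseteq> {x. \<phi> x = 0}" using assms(2) by (intro span_minimal) auto
  then show ?thesis using assms(3) by auto
qed

lemma f_indep': assumes "finite I" "\<And>x. (\<Sum>i\<in>I. a i * f i x) = 0" "i \<in> I" shows "a i = 0"
proof -
  define N where "N = Suc (Max I)"
  have sub: "I \<subseteq> {..<N}" using assms(1) by (auto simp: N_def less_Suc_eq_le)
  define a' where "a' = (\<lambda>i. if i \<in> I then a i else 0)"
  have "\<forall>x. (\<Sum>i<N. a' i * f i x) = 0"
  proof
    fix x
    have "(\<Sum>i<N. a' i * f i x) = (\<Sum>i\<in>I. a' i * f i x)"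
      by (rule sum.mono_neutral_right) (use sub in \<open>auto simp: a'_def\<close>)
    also have "\<dots> = 0" using assms(2)[of x] by (simp add: a'_def)
    finally show "(\<Sum>i<N. a' i * f i x) = 0" .
  qed
  from f_indep[OF this] have "a' i = 0" using assms(3) sub by auto
  then show ?thesis using assms(3) by (simp add: a'_def)
qed

definition Gf :: "('v,'k) st \<Rightarrow> nat \<Rightarrow> nat \<Rightarrow> 'v \<Rightarrow> 'k" where
  "Gf s n r x = f r x - (\<Sum>k<n. f r (vv s k) * gg s k x)"

definition wv :: "('v,'k) st \<Rightarrow> nat \<Rightarrow> nat \<Rightarrow> 'v" where
  "wv s n c = u c - (\<Sum>k<n. scale (gg s k (u c)) (vv s k))"

definition bn :: "('v,'k) st \<Rightarrow> nat \<Rightarrow> nat \<Rightarrow> nat \<Rightarrow> 'k" where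
  "bn s n r i = (if i = r then 1 else 0) - (\<Sum>k<n. f r (vv s k) * bb s k i)"

definition ext :: "('v,'k) st \<Rightarrow> nat \<Rightarrow> nat \<Rightarrow> nat \<Rightarrow> ('v,'k) st" where
  "ext s n r c =
   s\<lparr>al := (al s)(n:=r), be := (be s)(n:=c),
     vv := (vv s)(n := scale (inverse (Gf s n r (u c))) (wv s n c)),
     gg := (gg s)(n := Gf s n r),
     bb := (bb s)(n := bn s n r),
     aa := (aa s)(n := inverse (Gf s n r (u c)))\<rparr>"

definition Inv :: "('v,'k) st \<Rightarrow> nat \<Rightarrow> bool" where "Inv s n \<longleftrightarrow>
  inj_on (al s) {..<n} \<and> inj_on (be s) {..<n} \<and>
  (\<forall>j<n. \<forall>k<n. gg s j (vv s k) = (if j = k then 1 else 0)) \<and>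
  (\<forall>j<n. \<forall>x. f (al s j) x = gg s j x + (\<Sum>i<j. f (al s j) (vv s i) * gg s i x)) \<and>
  (\<forall>k<n. \<forall>x. gg s k x = (\<Sum>i\<in>al s ` {..<n}. bb s k i * f i x)) \<and>
  (\<forall>k<n. \<forall>i. i \<notin> al s ` {..<n} \<longrightarrow> bb s k i = 0) \<and>
  (\<forall>k<n. aa s k \<noteq> 0 \<and> vv s k - scale (aa s k) (u (be s k)) \<in> span (u ` be s ` {..<k})) \<and>
  (\<forall>m<n. u (be s m) \<in> span (vv s ` {..<n}))"

definition good :: "('v,'k) st \<Rightarrow> nat \<Rightarrow> nat \<Rightarrow> nat \<Rightarrow> bool" where
  "good s n r c \<longleftrightarrow> r \<notin> al s ` {..<n} \<and> c \<notin> be s ` {..<n} \<and> Gf s n r (u c) \<noteq> 0 \<and>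
    (even n \<longrightarrow> r = (LEAST r. r \<notin> al s ` {..<n})) \<and>
    (odd n \<longrightarrow> c = (LEAST c. c \<notin> be s ` {..<n}))"

context fixes s n assumes I: "Inv s n"
begin

lemma I2: "j < n \<Longrightarrow> k < n \<Longrightarrow> gg s j (vv s k) = (if j = k then 1 else 0)"
  using I unfolding Inv_def by blast
lemma I3: "j < n \<Longrightarrow> f (al s j) x = gg s j x + (\<Sum>i<j. f (al s j) (vv s i) * gg s i x)"
  using I unfolding Inv_def by blast
lemma I4: "k < n \<Longrightarrow> gg s k x = (\<Sum>i\<in>al s ` {..<n}. bb s k i * f i x)"
  using I unfolding Inv_def by blast
lemma I5: "k < n \<Longrightarrow> i \<notin> al s ` {..<n} \<Longrightarrow> bb s k i = 0"
  using I unfolding Inv_def by blast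
lemma I6: "k < n \<Longrightarrow> aa s k \<noteq> 0" "k < n \<Longrightarrow> vv s k - scale (aa s k) (u (be s k)) \<in> span (u ` be s ` {..<k})"
  using I unfolding Inv_def by blast+
lemma I7: "m < n \<Longrightarrow> u (be s m) \<in> span (vv s ` {..<n})"
  using I unfolding Inv_def by blast

lemma lin_g: "k < n \<Longrightarrow> lin (gg s k)"
proof -
  assume k: "k < n"
  have "gg s k = (\<lambda>x. \<Sum>i\<in>al s ` {..<n}. bb s k i * f i x)" using I4[OF k] by auto
  then show ?thesis using lin_rep by simp
qed

lemma lin_G: "lin (Gf s n r)"
proof -
  have a: "(\<Sum>k<n. f r (vv s k) * gg s k (x + y)) = (\<Sum>k<n. f r (vv s k) * gg s k x) + (\<Sum>k<n. f r (vv s k) * gg s k y)" for x y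
    by (simp add: sum.distrib[symmetric] distrib_left lin_add[OF lin_g])
  have b: "(\<Sum>k<n. f r (vv s k) * gg s k (scale c x)) = c * (\<Sum>k<n. f r (vv s k) * gg s k x)" for c x
    by (simp add: sum_distrib_left lin_scale[OF lin_g] mult.left_commute)
  show ?thesis unfolding lin_def Gf_def
    by (simp add: a b lin_add[OF lin_f] lin_scale[OF lin_f] right_diff_distrib)
qed

lemma G_v: "k < n \<Longrightarrow> Gf s n r (vv s k) = 0"
proof -
  assume k: "k < n"
  have "(\<Sum>i<n. f r (vv s i) * gg s i (vv s k)) = (\<Sum>i<n. if i = k then f r (vv s i) else 0)"
    by (rule sum.cong) (auto simp: I2 k)
  also have "\<dots> = f r (vv s k)" using k by simp
  finally show ?thesis by (simp add: Gf_def)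
qed

lemma G_span: "x \<in> span (vv s ` {..<n}) \<Longrightarrow> Gf s n r x = 0"
  by (rule lin_span0[OF lin_G]) (auto simp: G_v)

lemma v_uspan: "k < n \<Longrightarrow> vv s k \<in> span (u ` be s ` {..<n})"
proof -
  assume k: "k < n"
  have "vv s k = (vv s k - scale (aa s k) (u (be s k))) + scale (aa s k) (u (be s k))" by simp
  moreover have "vv s k - scale (aa s k) (u (be s k)) \<in> span (u ` be s ` {..<n})"
  proof -
    have "{..<k} \<subseteq> {..<n}" using k by auto
    then have "span (u ` be s ` {..<k}) \<subseteq> span (u ` be s ` {..<n})" by (intro span_mono image_mono)
    then show ?thesis using I6(2)[OF k] by blast
  qed
  moreover have "scale (aa s k) (u (be s k)) \<in> span (u ` be s ` {..<n})"
    using k by (intro span_scale span_base) auto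
  ultimately show ?thesis by (metis span_add)
qed

lemma g_w: "j < n \<Longrightarrow> gg s j (wv s n c) = 0"
proof -
  assume j: "j < n"
  have "gg s j (wv s n c) = gg s j (u c) - (\<Sum>k<n. gg s k (u c) * gg s j (vv s k))"
    by (simp add: wv_def lin_diff[OF lin_g[OF j]] lin_sum[OF lin_g[OF j]] lin_scale[OF lin_g[OF j]])
  also have "(\<Sum>k<n. gg s k (u c) * gg s j (vv s k)) = (\<Sum>k<n. if k = j then gg s k (u c) else 0)"
    by (rule sum.cong) (auto simp: I2 j)
  finally show ?thesis using j by simp
qed

lemma G_w: "Gf s n r (wv s n c) = Gf s n r (u c)"
  by (simp add: wv_def lin_diff[OF lin_G] lin_sum[OF lin_G] lin_scale[OF lin_G] G_v)

lemma G_w2: "Gf s n r (wv s n c) = f r (wv s n c)"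
  by (simp add: Gf_def g_w)

lemma G_rep: assumes r: "r \<notin> al s ` {..<n}"
  shows "Gf s n r x = (\<Sum>i\<in>insert r (al s ` {..<n}). bn s n r i * f i x)"
proof -
  let ?U = "al s ` {..<n}"
  have fin: "finite ?U" by simp
  have "(\<Sum>i\<in>insert r ?U. bn s n r i * f i x) =
      (\<Sum>i\<in>insert r ?U. (if i = r then f i x else 0)) - (\<Sum>i\<in>insert r ?U. \<Sum>k<n. f r (vv s k) * (bb s k i * f i x))"
  proof -
    have "\<And>i. bn s n r i * f i x = (if i = r then f i x else 0) - (\<Sum>k<n. f r (vv s k) * (bb s k i * f i x))"
      by (simp add: bn_def left_diff_distrib sum_distrib_right mult.assoc)
    then show ?thesis by (simp add: sum_subtractf)
  qed
  also have "(\<Sum>i\<in>insert r ?U. (if i = r then f i x else 0)) = f r x" using fin by simp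
  also have "(\<Sum>i\<in>insert r ?U. \<Sum>k<n. f r (vv s k) * (bb s k i * f i x))
      = (\<Sum>k<n. f r (vv s k) * (\<Sum>i\<in>insert r ?U. bb s k i * f i x))"
    by (simp add: sum.swap[of _ "insert r ?U"] sum_distrib_left)
  also have "\<dots> = (\<Sum>k<n. f r (vv s k) * gg s k x)"
  proof (rule sum.cong)
    fix k assume "k \<in> {..<n}"
    then have k: "k < n" by simp
    have "(\<Sum>i\<in>insert r ?U. bb s k i * f i x) = bb s k r * f r x + (\<Sum>i\<in>?U. bb s k i * f i x)"
      using fin r by simp
    also have "\<dots> = gg s k x" using I5[OF k r] I4[OF k] by simp
    finally show "f r (vv s k) * (\<Sum>i\<in>insert r ?U. bb s k i * f i x) = f r (vv s k) * gg s k x" by simp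
  qed simp
  finally show ?thesis by (simp add: Gf_def)
qed

lemma bn_r: "r \<notin> al s ` {..<n} \<Longrightarrow> bn s n r r = 1"
  by (simp add: bn_def I5)

lemma exists_good: "\<exists>r c. good s n r c"
proof (cases "even n")
  case True
  let ?U = "al s ` {..<n}"
  define r where "r = (LEAST r. r \<notin> ?U)"
  have "\<exists>r. r \<notin> ?U" using ex_new_if_finite[OF infinite_UNIV_nat] by simp
  then have r: "r \<notin> ?U" unfolding r_def by (rule LeastI_ex)
  have "\<exists>c. Gf s n r (u c) \<noteq> 0"
  proof (rule ccontr)
    assume "\<not> ?thesis"
    then have "\<forall>c. Gf s n r (u c) = 0" by simp
    then have "\<And>x. Gf s n r x = 0"
      using lin_span0[OF lin_G, of "range u" r] u_span by auto
    then have "\<And>x. (\<Sum>i\<in>insert r ?U. bn s n r i * f i x) = 0" by (metis G_rep[OF r])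
    from f_indep'[OF _ this] have "bn s n r r = 0" by simp
    then show False using bn_r[OF r] by simp
  qed
  then obtain c where c: "Gf s n r (u c) \<noteq> 0" by blast
  have "c \<notin> be s ` {..<n}"
  proof
    assume "c \<in> be s ` {..<n}"
    then obtain m where "m < n" "c = be s m" by auto
    then have "Gf s n r (u c) = 0" using G_span I7 by simp
    with c show False by simp
  qed
  then have "good s n r c" using r c True by (simp add: good_def r_def)
  then show ?thesis by blast
next
  case False
  let ?U = "al s ` {..<n}"
  let ?B = "be s ` {..<n}"
  define c where "c = (LEAST c. c \<notin> ?B)"
  have "\<exists>c. c \<notin> ?B" using ex_new_if_finite[OF infinite_UNIV_nat] by simp
  then have c: "c \<notin> ?B" unfolding c_def by (rule LeastI_ex)
  have w: "wv s n c \<noteq> 0"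
  proof
    assume "wv s n c = 0"
    then have "u c = (\<Sum>k<n. scale (gg s k (u c)) (vv s k))" by (simp add: wv_def)
    also have "\<dots> \<in> span (u ` ?B)"
      by (intro span_sum span_scale) (simp add: v_uspan)
    also have "span (u ` ?B) \<subseteq> span (range u - {u c})"
      using c u_inj by (intro span_mono) (auto simp: inj_eq)
    finally have "dependent (range u)" unfolding dependent_def by blast
    with u_indep show False by simp
  qed
  obtain r where r0: "f r (wv s n c) \<noteq> f r 0" using f_sep[OF w] by blast
  then have rw: "f r (wv s n c) \<noteq> 0" using lin_zero[OF lin_f] by simp
  have r: "r \<notin> ?U"
  proof
    assume "r \<in> ?U"
    then obtain j where j: "j < n" "r = al s j" by auto
    have "f (al s j) (wv s n c) = gg s j (wv s n c) + (\<Sum>i<j. f (al s j) (vv s i) * gg s i (wv s n c))"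
      by (rule I3[OF j(1)])
    also have "\<dots> = 0" using j(1) by (simp add: g_w)
    finally have "f r (wv s n c) = 0" using j by simp
    with rw show False by simp
  qed
  have "Gf s n r (u c) \<noteq> 0" using G_w G_w2 rw by simp
  then have "good s n r c" using r c False by (simp add: good_def c_def)
  then show ?thesis by blast
qed

lemma preserve: assumes g: "good s n r c" shows "Inv (ext s n r c) (Suc n)"
proof -
  let ?U = "al s ` {..<n}"
  let ?s = "ext s n r c"
  define G where "G = Gf s n r"
  define a where "a = inverse (G (u c))"
  define w where "w = wv s n c"
  have r: "r \<notin> ?U" and c: "c \<notin> be s ` {..<n}" and Gc: "G (u c) \<noteq> 0"
    using g by (auto simp: good_def G_def)
  have a0: "a \<noteq> 0" using Gc by (simp add: a_def)
  have al: "al ?s = (al s)(n:=r)" and be: "be ?s = (be s)(n:=c)" and vv: "vv ?s = (vv s)(n := scale a w)"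
    and gg: "gg ?s = (gg s)(n:=G)" and bb: "bb ?s = (bb s)(n := bn s n r)" and aa: "aa ?s = (aa s)(n:=a)"
    by (simp_all add: ext_def G_def a_def w_def)
  have img2: "\<And>h x k. k \<le> n \<Longrightarrow> (h(n:=x)) ` {..<k} = h ` {..<k}" by auto
  have cap: "\<And>k. k \<le> n \<Longrightarrow> {..<k} \<inter> {x. x \<noteq> n} = {..<k}" by auto
  have U': "al ?s ` {..<Suc n} = insert r ?U"
    by (simp only: al lessThan_Suc image_insert img2[OF order_refl] fun_upd_same)
  have V': "vv ?s ` {..<Suc n} = insert (scale a w) (vv s ` {..<n})"
    by (simp only: vv lessThan_Suc image_insert img2[OF order_refl] fun_upd_same)
  have linG: "lin G" unfolding G_def by (rule lin_G)
  have Gv: "\<And>k. k < n \<Longrightarrow> G (vv s k) = 0" unfolding G_def by (rule G_v)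
  have Gw: "G w = G (u c)" unfolding G_def w_def by (rule G_w)
  have Gvn: "G (scale a w) = 1" using Gc by (simp add: lin_scale[OF linG] Gw a_def)
  have gvn: "\<And>j. j < n \<Longrightarrow> gg s j (scale a w) = 0"
    by (simp add: lin_scale[OF lin_g] g_w w_def)
  have injA: "inj_on (al s) {..<n}" and injB: "inj_on (be s) {..<n}" using I unfolding Inv_def by blast+
  have h1: "inj_on (al ?s) {..<Suc n}"
    using injA r unfolding al by (auto simp: inj_on_def less_Suc_eq)
  have h2: "inj_on (be ?s) {..<Suc n}"
    using injB c unfolding be by (auto simp: inj_on_def less_Suc_eq)
  have h3: "\<forall>j<Suc n. \<forall>k<Suc n. gg ?s j (vv ?s k) = (if j = k then 1 else 0)"
    by (auto simp: gg vv less_Suc_eq I2 Gv gvn Gvn)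
  have h4: "\<forall>j<Suc n. \<forall>x. f (al ?s j) x = gg ?s j x + (\<Sum>i<j. f (al ?s j) (vv ?s i) * gg ?s i x)"
  proof (intro allI impI)
    fix j x assume j: "j < Suc n"
    have eqs: "(\<Sum>i<j. f (al ?s j) (vv ?s i) * gg ?s i x) = (\<Sum>i<j. f (al ?s j) (vv s i) * gg s i x)"
      by (rule sum.cong) (use j in \<open>auto simp: vv gg\<close>)
    show "f (al ?s j) x = gg ?s j x + (\<Sum>i<j. f (al ?s j) (vv ?s i) * gg ?s i x)"
    proof (cases "j < n")
      case True
      then show ?thesis unfolding eqs using I3[OF True, of x] by (simp add: al gg)
    next
      case False
      then have "j = n" using j by simp
      then show ?thesis unfolding eqs by (simp add: al gg G_def Gf_def)
    qed
  qed
  have h5: "\<forall>k<Suc n. \<forall>x. gg ?s k x = (\<Sum>i\<in>al ?s ` {..<Suc n}. bb ?s k i * f i x)"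
  proof (intro allI impI)
    fix k x assume k: "k < Suc n"
    show "gg ?s k x = (\<Sum>i\<in>al ?s ` {..<Suc n}. bb ?s k i * f i x)"
    proof (cases "k < n")
      case True
      then show ?thesis unfolding U' using I4[OF True, of x] I5[OF True r] r by (simp add: gg bb)
    next
      case False
      then have "k = n" using k by simp
      then show ?thesis unfolding U' using G_rep[OF r, of x] by (simp add: gg bb G_def)
    qed
  qed
  have h6: "\<forall>k<Suc n. \<forall>i. i \<notin> al ?s ` {..<Suc n} \<longrightarrow> bb ?s k i = 0"
    unfolding U' by (auto simp: bb less_Suc_eq I5 bn_def)
  have h7: "\<forall>k<Suc n. aa ?s k \<noteq> 0 \<and> vv ?s k - scale (aa ?s k) (u (be ?s k)) \<in> span (u ` be ?s ` {..<k})"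
  proof (intro allI impI)
    fix k assume k: "k < Suc n"
    show "aa ?s k \<noteq> 0 \<and> vv ?s k - scale (aa ?s k) (u (be ?s k)) \<in> span (u ` be ?s ` {..<k})"
    proof (cases "k < n")
      case True
      then show ?thesis using I6[OF True] by (simp add: aa vv be img2 cap)
    next
      case False
      then have kn: "k = n" using k by simp
      have "scale a w - scale a (u c) = - scale a (\<Sum>k<n. scale (gg s k (u c)) (vv s k))"
        by (simp add: w_def wv_def scale_right_diff_distrib)
      also have "\<dots> \<in> span (u ` be s ` {..<n})"
        by (intro span_neg span_scale span_sum) (simp add: v_uspan)
      finally show ?thesis using a0 kn by (simp add: aa vv be img2 cap)
    qed
  qed
  have h8: "\<forall>m<Suc n. u (be ?s m) \<in> span (vv ?s ` {..<Suc n})"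
  proof (intro allI impI)
    fix m assume m: "m < Suc n"
    show "u (be ?s m) \<in> span (vv ?s ` {..<Suc n})"
    proof (cases "m < n")
      case True
      then show ?thesis unfolding V' using I7[OF True] span_mono[of "vv s ` {..<n}" "insert (scale a w) (vv s ` {..<n})"]
        by (auto simp: be)
    next
      case False
      then have mn: "m = n" using m by simp
      have "u c = scale (G (u c)) (scale a w) + (\<Sum>k<n. scale (gg s k (u c)) (vv s k))"
        using Gc by (simp add: a_def w_def wv_def)
      also have "\<dots> \<in> span (insert (scale a w) (vv s ` {..<n}))"
        by (intro span_add span_scale span_sum span_base) auto
      finally show ?thesis unfolding V' using mn by (simp add: be)
    qed
  qed
  show ?thesis unfolding Inv_def using h1 h2 h3 h4 h5 h6 h7 h8 by blast
qed

end

definition chs :: "('v,'k) st \<Rightarrow> nat \<Rightarrow> nat \<times> nat" where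
  "chs s n = (SOME p. good s n (fst p) (snd p))"

primrec S :: "nat \<Rightarrow> ('v,'k) st" where
  "S 0 = \<lparr>al = (\<lambda>_. 0), be = (\<lambda>_. 0), vv = (\<lambda>_. 0), gg = (\<lambda>_ _. 0), bb = (\<lambda>_ _. 0), aa = (\<lambda>_. 0)\<rparr>"
| "S (Suc n) = ext (S n) n (fst (chs (S n) n)) (snd (chs (S n) n))"

declare S.simps(2)[simp del]

lemma S_inv_good: "Inv (S n) n \<and> good (S n) n (fst (chs (S n) n)) (snd (chs (S n) n))"
proof (induction n)
  case 0
  have I0: "Inv (S 0) 0" by (simp add: Inv_def)
  from exists_good[OF I0] have "\<exists>p. good (S 0) 0 (fst p) (snd p)" by auto
  then have "good (S 0) 0 (fst (chs (S 0) 0)) (snd (chs (S 0) 0))"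
    unfolding chs_def by (rule someI_ex)
  with I0 show ?case by simp
next
  case (Suc n)
  then have I': "Inv (S (Suc n)) (Suc n)" using preserve by (simp add: S.simps(2))
  from exists_good[OF I'] have "\<exists>p. good (S (Suc n)) (Suc n) (fst p) (snd p)" by auto
  then have "good (S (Suc n)) (Suc n) (fst (chs (S (Suc n)) (Suc n))) (snd (chs (S (Suc n)) (Suc n)))"
    unfolding chs_def by (rule someI_ex)
  with I' show ?case by simp
qed

lemma S_inv: "Inv (S n) n" using S_inv_good by blast
lemma S_good: "good (S n) n (fst (chs (S n) n)) (snd (chs (S n) n))" using S_inv_good by blast

definition "A j = al (S (Suc j)) j"
definition "B j = be (S (Suc j)) j"
definition "Vf j = vv (S (Suc j)) j"
definition "Gg j = gg (S (Suc j)) j"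
definition "Af j = aa (S (Suc j)) j"

lemma stable: "j < n \<Longrightarrow> al (S n) j = A j \<and> be (S n) j = B j \<and> vv (S n) j = Vf j \<and> gg (S n) j = Gg j \<and> aa (S n) j = Af j"
proof (induction n)
  case 0 then show ?case by simp
next
  case (Suc n)
  show ?case
  proof (cases "j = n")
    case True then show ?thesis by (simp add: A_def B_def Vf_def Gg_def Af_def S.simps(2))
  next
    case False
    then have "j < n" using Suc.prems by simp
    with Suc.IH False show ?thesis by (simp add: ext_def S.simps(2))
  qed
qed

lemma stA: "j < n \<Longrightarrow> al (S n) j = A j" using stable by blast
lemma stB: "j < n \<Longrightarrow> be (S n) j = B j" using stable by blast
lemma stV: "j < n \<Longrightarrow> vv (S n) j = Vf j" using stable by blast
lemma stG: "j < n \<Longrightarrow> gg (S n) j = Gg j" using stable by blast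
lemma stAf: "j < n \<Longrightarrow> aa (S n) j = Af j" using stable by blast

lemma imgA: "al (S n) ` {..<n} = A ` {..<n}" by (auto simp: stA)
lemma imgB: "k \<le> n \<Longrightarrow> be (S n) ` {..<k} = B ` {..<k}" by (auto simp: stB)

lemma FI2: "Gg j (Vf k) = (if j = k then 1 else 0)"
proof -
  let ?n = "Suc (max j k)"
  have "gg (S ?n) j (vv (S ?n) k) = (if j = k then 1 else 0)" by (rule I2[OF S_inv]) auto
  then show ?thesis by (simp add: stG stV)
qed

lemma FI3: "f (A j) x = Gg j x + (\<Sum>i<j. f (A j) (Vf i) * Gg i x)"
proof -
  let ?n = "Suc j"
  have "f (al (S ?n) j) x = gg (S ?n) j x + (\<Sum>i<j. f (al (S ?n) j) (vv (S ?n) i) * gg (S ?n) i x)"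
    by (rule I3[OF S_inv]) auto
  also have "(\<Sum>i<j. f (al (S ?n) j) (vv (S ?n) i) * gg (S ?n) i x) = (\<Sum>i<j. f (A j) (Vf i) * Gg i x)"
    by (rule sum.cong) (auto simp: stA stV stG)
  finally show ?thesis by (simp add: stA stG)
qed

lemma FI6: "Af k \<noteq> 0 \<and> Vf k - scale (Af k) (u (B k)) \<in> span (u ` B ` {..<k})"
  using I6[OF S_inv, of k "Suc k"] by (simp add: stAf stV stB imgB)

lemma inj_A: "inj A"
proof
  fix i j assume "A i = A j"
  moreover have "inj_on (al (S (Suc (max i j)))) {..<Suc (max i j)}" using S_inv unfolding Inv_def by blast
  ultimately show "i = j" by (auto simp: inj_on_def stA)
qed

lemma inj_B: "inj B"
proof
  fix i j assume "B i = B j"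
  moreover have "inj_on (be (S (Suc (max i j)))) {..<Suc (max i j)}" using S_inv unfolding Inv_def by blast
  ultimately show "i = j" by (auto simp: inj_on_def stB)
qed

lemma A_step: "A n = fst (chs (S n) n)" by (simp add: A_def ext_def S.simps(2))
lemma B_step: "B n = snd (chs (S n) n)" by (simp add: B_def ext_def S.simps(2))
lemma goodAB: "good (S n) n (A n) (B n)" using S_good[of n] by (simp only: A_step B_step)

lemma surj_A: "surj A"
proof -
  have h: "A (2*m+0) = (LEAST r. r \<notin> A ` {..<2*m+0})" for m
    using goodAB[of "2*m"] by (simp add: good_def imgA)
  have "m \<in> A ` {..<2*m+0+1}" for m by (rule surj_aux[OF h])
  then show ?thesis by blast
qed

lemma surj_B: "surj B"
proof -
  have h: "B (2*m+1) = (LEAST r. r \<notin> B ` {..<2*m+1})" for m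
    using goodAB[of "2*m+1"] by (simp add: good_def imgB)
  have "m \<in> B ` {..<2*m+1+1}" for m by (rule surj_aux[OF h])
  then show ?thesis by blast
qed

lemma fAV: "j < k \<Longrightarrow> f (A j) (Vf k) = 0" "f (A j) (Vf j) = 1"
proof -
  show "j < k \<Longrightarrow> f (A j) (Vf k) = 0" by (simp add: FI3[of j "Vf k"] FI2)
  show "f (A j) (Vf j) = 1" by (simp add: FI3[of j "Vf j"] FI2)
qed

lemma rep_ex: "\<exists>d. Vf k = scale (Af k) (u (B k)) + (\<Sum>m<k. scale (d m) (u (B m)))"
proof -
  have fin: "finite (u ` B ` {..<k})" by simp
  have mem: "Vf k - scale (Af k) (u (B k)) \<in> span (u ` B ` {..<k})" using FI6[of k] by (rule conjunct2)
  then have "Vf k - scale (Af k) (u (B k)) \<in> range (\<lambda>co. \<Sum>y\<in>u ` B ` {..<k}. scale (co y) y)"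
    by (simp only: span_finite[OF fin])
  then obtain co where
    co: "Vf k - scale (Af k) (u (B k)) = (\<Sum>y\<in>u ` B ` {..<k}. scale (co y) y)" by (rule rangeE)
  have "inj (\<lambda>m. u (B m))" using inj_compose[OF u_inj inj_B] by (simp add: comp_def)
  then have injUB: "inj_on (\<lambda>m. u (B m)) {..<k}" by (rule inj_on_subset) simp
  have "(\<Sum>y\<in>u ` B ` {..<k}. scale (co y) y) = (\<Sum>m<k. scale (co (u (B m))) (u (B m)))"
    using sum.reindex[OF injUB, of "\<lambda>y. scale (co y) y"] by (simp add: image_image)
  with co show ?thesis by (intro exI[of _ "\<lambda>m. co (u (B m))"]) (simp add: algebra_simps)
qed

lemma main: "\<exists>\<alpha> \<beta>. bij \<alpha> \<and> bij \<beta> \<and>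
           (\<forall>n. invertible_mat (mat n n (\<lambda>(j, k). f (\<alpha> j) (u (\<beta> k))))) \<and>
           (\<exists>c :: nat \<Rightarrow> nat \<Rightarrow> 'k. (\<forall>j. c j j \<noteq> 0) \<and>
              (let v = (\<lambda>k. \<Sum>m\<le>k. scale (c m k) (u (\<beta> m))) in
                 (\<forall>j. f (\<alpha> j) (v j) = 1) \<and>
                 (\<forall>j k. j < k \<longrightarrow> f (\<alpha> j) (v k) = 0)))"
proof -
  from rep_ex have "\<forall>k. \<exists>d. Vf k = scale (Af k) (u (B k)) + (\<Sum>m<k. scale (d m) (u (B m)))" by blast
  from choice[OF this] obtain D where D: "\<forall>k. Vf k = scale (Af k) (u (B k)) + (\<Sum>m<k. scale (D k m) (u (B m)))"
    by blast
  define cc where "cc m k = (if m = k then Af k else D k m)" for m k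
  have ccd: "cc k k \<noteq> 0" for k using FI6[of k] by (simp add: cc_def)
  have vrep: "(\<Sum>m\<le>k. scale (cc m k) (u (B m))) = Vf k" for k
  proof -
    have "(\<Sum>m\<le>k. scale (cc m k) (u (B m))) = scale (cc k k) (u (B k)) + (\<Sum>m<k. scale (cc m k) (u (B m)))"
      by (simp add: lessThan_Suc_atMost[symmetric] lessThan_Suc)
    also have "(\<Sum>m<k. scale (cc m k) (u (B m))) = (\<Sum>m<k. scale (D k m) (u (B m)))"
      by (rule sum.cong) (auto simp: cc_def)
    also have "scale (cc k k) (u (B k)) + (\<Sum>m<k. scale (D k m) (u (B m))) = Vf k"
      using D by (simp add: cc_def)
    finally show ?thesis .
  qed
  have inv: "invertible_mat (mat n n (\<lambda>(j, k). f (A j) (u (B k))))" for n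
  proof -
    define M where "M = mat n n (\<lambda>(j, k). f (A j) (u (B k)))"
    define C where "C = mat n n (\<lambda>(m, k). if m \<le> k then cc m k else 0)"
    have M: "M \<in> carrier_mat n n" and C: "C \<in> carrier_mat n n" by (simp_all add: M_def C_def)
    have MC: "(M * C) $$ (j, k) = f (A j) (Vf k)" if j: "j < n" and k: "k < n" for j k
    proof -
      have "(M * C) $$ (j, k) = (\<Sum>m\<in>{0..<n}. f (A j) (u (B m)) * (if m \<le> k then cc m k else 0))"
        using j k by (simp add: M_def C_def scalar_prod_def)
      also have "\<dots> = (\<Sum>m\<in>{..k}. f (A j) (u (B m)) * cc m k)"
        by (rule sum.mono_neutral_cong_right) (use k in auto)
      also have "\<dots> = f (A j) (\<Sum>m\<le>k. scale (cc m k) (u (B m)))"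
        by (simp add: lin_sum[OF lin_f] lin_scale[OF lin_f] mult.commute)
      finally show ?thesis by (simp add: vrep)
    qed
    have MCc: "M * C \<in> carrier_mat n n" using M C by simp
    have "det (M * C) = prod_list (diag_mat (M * C))"
      by (rule det_lower_triangular[OF _ MCc]) (simp add: MC fAV)
    also have "\<dots> \<noteq> 0" using MCc by (auto simp: prod_list_zero_iff diag_mat_def MC fAV)
    finally have d1: "det (M * C) \<noteq> 0" .
    have "upper_triangular C" by (auto simp: upper_triangular_def C_def)
    then have "det C = prod_list (diag_mat C)" by (rule det_upper_triangular[OF _ C])
    also have "\<dots> \<noteq> 0" by (auto simp: prod_list_zero_iff diag_mat_def C_def ccd)
    finally have "det C \<noteq> 0" .
    have "det M \<noteq> 0" using d1 det_mult[OF M C] by auto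
    then show ?thesis unfolding M_def[symmetric] by (rule det_inv_mat[OF M])
  qed
  show ?thesis
    apply (rule exI[of _ A], rule exI[of _ B])
    apply (intro conjI)
       apply (simp add: bij_def inj_A surj_A)
      apply (simp add: bij_def inj_B surj_B)
     apply (simp add: inv)
    apply (rule exI[of _ cc])
    apply (simp add: Let_def vrep ccd fAV)
    done
qed

end

theorem lemma3p4:
  fixes scale :: "'k::real_normed_field \<Rightarrow> 'v::ab_group_add \<Rightarrow> 'v"
    and u :: "nat \<Rightarrow> 'v"
    and f :: "nat \<Rightarrow> 'v \<Rightarrow> 'k"
  assumes vs: "vector_space scale"
    and u_inj: "inj u"
    and u_indep: "module.independent scale (range u)"
    and u_span: "module.span scale (range u) = UNIV"
    and f_lin: "\<And>n. Vector_Spaces.linear scale (*) (f n)"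
    and f_indep: "\<And>n (a :: nat \<Rightarrow> 'k). (\<forall>x. (\<Sum>i<n. a i * f i x) = 0) \<Longrightarrow> (\<forall>i<n. a i = 0)"
    and f_sep: "\<And>x y. x \<noteq> y \<Longrightarrow> \<exists>n. f n x \<noteq> f n y"
  shows "\<exists>\<alpha> \<beta>. bij \<alpha> \<and> bij \<beta> \<and>
           (\<forall>n. invertible_mat (mat n n (\<lambda>(j, k). f (\<alpha> j) (u (\<beta> k))))) \<and>
           (\<exists>c :: nat \<Rightarrow> nat \<Rightarrow> 'k. (\<forall>j. c j j \<noteq> 0) \<and>
              (let v = (\<lambda>k. \<Sum>m\<le>k. scale (c m k) (u (\<beta> m))) in
                 (\<forall>j. f (\<alpha> j) (v j) = 1) \<and>
                 (\<forall>j k. j < k \<longrightarrow> f (\<alpha> j) (v k) = 0)))"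
proof -
  have "L scale u f"
    unfolding L_def L_axioms_def using vs u_inj u_indep u_span f_lin f_indep f_sep by blast
  then show ?thesis by (rule L.main)
qed

end
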